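(* Let $(\mathbb R^4,g)$ be the pp-wave $g=-(x^2+y^2)\,du^2+2\,du\,dv+dx^2+dy^2$ in coordinates $(u,v,x,y)$, and let $Z:=\tfrac12(H+k^2+h^2)\partial_v-\partial_u+k\partial_x+h\partial_y$ with $H=-x^2-y^2$, $k=-y$, $h=x$ (so $Z=-\partial_u-y\partial_x+x\partial_y$). Then $(\mathbb R^4,g,Z,\nabla u)$ is admissible (with $\nabla u=\partial_v$, $\tau=u$, $\ell=1$, and orientation such that $J=J_{g,Z,\nabla u}$ satisfies $JX=Y$ for $X:=k\partial_v+\partial_x$, $Y:=h\partial_v+\partial_y$), and the induced tensor $g_K=d(e^uZ^\flat)(\cdot,J\cdot)$ is a Kähler metric on all of $\mathbb R^4$.
   Context: Admissibility: an oriented semi-Riemannian $4$-manifold $(M,g)$ with vector fields $k_+,k_-$ (here $k_+=Z$, $k_-=\nabla u$) is admissible if $k_\pm$ are pointwise linearly independent, $\mathcal V:=\mathrm{span}(k_+,k_-)$ has spacelike orthogonal complement $\mathcal H$, and, with $J=J_{g,k_+,k_-}$ defined by $Jk_+=k_-$, $Jk_-=-k_+$, $Je_1=e_2$, $Je_2=-e_1$ for positively oriented orthonormal frames $(e_1,e_2)$ of $\mathcal H$: $[k_\pm,\Gamma(\mathcal H)]\subset\Gamma(\mathcal H)$; $J\circ\nabla^ok_+=\nabla^ok_-$ on $\mathcal H$, where $\nabla^oX$ is the trace-free symmetric part of $\mathcal H\to\mathcal H$, $v\mapsto(\nabla_vX)^{\mathcal H}$; $k_-=\ell\nabla\tau$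 for smooth $\ell,\tau$; and $\nabla(g(k_+,k_-))$, $\nabla(g(k_+,k_+))$ take values in $\mathcal V$. $Z^\flat=g(Z,\cdot)$. The induced metric $g_K:=d(f(\tau)k_+^\flat)(\cdot,J\cdot)$ is Kähler where $f\iota<0$ and $f'G/\ell-f\,dk_+^\flat(k_+,k_-)<0$, with $\iota=g(k_+,[e_1,e_2])$ and $G=g(k_+,k_+)g(k_-,k_-)-g(k_+,k_-)^2$. *)

theory Defs
  imports "HOL-Analysis.Analysis"
begin

text \<open>Points of R^4 are vectors of type real^4.  Coordinate convention:
  index 1 = u, index 2 = v, index 3 = x, index 4 = y (in the numeral type 4,
  the numeral 4 denotes the fourth element, equal to 0).
  Tangent vectors at a point are again elements of real^4 (components w.r.t.
  the coordinate frame).\<close>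

type_synonym pt = "real^4"

definition cu :: "pt \<Rightarrow> real" where "cu p = p $ 1"
definition cv :: "pt \<Rightarrow> real" where "cv p = p $ 2"
definition cx :: "pt \<Rightarrow> real" where "cx p = p $ 3"
definition cy :: "pt \<Rightarrow> real" where "cy p = p $ 4"

definition du :: pt where "du = axis 1 1"
definition dv :: pt where "dv = axis 2 1"
definition dx :: pt where "dx = axis 3 1"
definition dy :: pt where "dy = axis 4 1"

definition pd :: "(pt \<Rightarrow> real) \<Rightarrow> pt \<Rightarrow> 4 \<Rightarrow> real" where
  "pd f p i = deriv (\<lambda>t. f (p + t *\<^sub>R axis i 1)) 0"

coinductive smoothR :: "(pt \<Rightarrow> real) \<Rightarrow> bool" where
  "(\<forall>p. f differentiable (at p)) \<Longrightarrow> (\<forall>i. smoothR (\<lambda>p. pd f p i)) \<Longrightarrow> smoothR f"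

definition smoothV :: "(pt \<Rightarrow> pt) \<Rightarrow> bool" where
  "smoothV X \<longleftrightarrow> (\<forall>k. smoothR (\<lambda>p. X p $ k))"

text \<open>A metric is given by its Gram matrix field G (entries g(d_i,d_j)).\<close>
definition gmet :: "(pt \<Rightarrow> real^4^4) \<Rightarrow> pt \<Rightarrow> pt \<Rightarrow> pt \<Rightarrow> real" where
  "gmet G p v w = v \<bullet> (G p *v w)"

definition semi_riemannian :: "(pt \<Rightarrow> real^4^4) \<Rightarrow> bool" where
  "semi_riemannian G \<longleftrightarrow> (\<forall>i j. smoothR (\<lambda>p. G p $ i $ j)) \<and>
     (\<forall>p. transpose (G p) = G p \<and> det (G p) \<noteq> 0)"

definition ppwave :: "pt \<Rightarrow> real^4^4" where
  "ppwave p = (\<chi> i j.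
     if i = 1 \<and> j = 1 then - ((cx p)\<^sup>2 + (cy p)\<^sup>2)
     else if (i = 1 \<and> j = 2) \<or> (i = 2 \<and> j = 1) then 1
     else if i = j \<and> (i = 3 \<or> i = 4) then 1
     else 0)"

definition vder :: "(pt \<Rightarrow> pt) \<Rightarrow> (pt \<Rightarrow> real) \<Rightarrow> pt \<Rightarrow> real" where
  "vder X f p = (\<Sum>i\<in>UNIV. X p $ i * pd f p i)"

definition lie :: "(pt \<Rightarrow> pt) \<Rightarrow> (pt \<Rightarrow> pt) \<Rightarrow> pt \<Rightarrow> pt" where
  "lie X Y p = (\<chi> k. vder X (\<lambda>q. Y q $ k) p - vder Y (\<lambda>q. X q $ k) p)"

definition grad :: "(pt \<Rightarrow> real^4^4) \<Rightarrow> (pt \<Rightarrow> real) \<Rightarrow> pt \<Rightarrow> pt" where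
  "grad G f p = matrix_inv (G p) *v (\<chi> i. pd f p i)"

definition christ :: "(pt \<Rightarrow> real^4^4) \<Rightarrow> pt \<Rightarrow> 4 \<Rightarrow> 4 \<Rightarrow> 4 \<Rightarrow> real" where
  "christ G p k i j = (1/2) * (\<Sum>l\<in>UNIV. matrix_inv (G p) $ k $ l *
      (pd (\<lambda>q. G q $ j $ l) p i + pd (\<lambda>q. G q $ i $ l) p j - pd (\<lambda>q. G q $ i $ j) p l))"

text \<open>covd G X p v = (nabla_v X)(p) for the Levi-Civita connection of G.\<close>
definition covd :: "(pt \<Rightarrow> real^4^4) \<Rightarrow> (pt \<Rightarrow> pt) \<Rightarrow> pt \<Rightarrow> pt \<Rightarrow> pt" where
  "covd G X p v = (\<chi> k. (\<Sum>i\<in>UNIV. v $ i * pd (\<lambda>q. X q $ k) p i)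
      + (\<Sum>i\<in>UNIV. \<Sum>j\<in>UNIV. christ G p k i j * v $ i * X p $ j))"

definition Vsp :: "(pt \<Rightarrow> pt) \<Rightarrow> (pt \<Rightarrow> pt) \<Rightarrow> pt \<Rightarrow> pt set" where
  "Vsp kp km p = span {kp p, km p}"

definition Hsp :: "(pt \<Rightarrow> real^4^4) \<Rightarrow> (pt \<Rightarrow> pt) \<Rightarrow> (pt \<Rightarrow> pt) \<Rightarrow> pt \<Rightarrow> pt set" where
  "Hsp G kp km p = {w. gmet G p w (kp p) = 0 \<and> gmet G p w (km p) = 0}"

definition ONframe :: "(pt \<Rightarrow> real^4^4) \<Rightarrow> (pt \<Rightarrow> pt) \<Rightarrow> (pt \<Rightarrow> pt) \<Rightarrow> pt \<Rightarrow> pt \<Rightarrow> pt \<Rightarrow> bool" where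
  "ONframe G kp km p e1 e2 \<longleftrightarrow> e1 \<in> Hsp G kp km p \<and> e2 \<in> Hsp G kp km p \<and>
     gmet G p e1 e1 = 1 \<and> gmet G p e2 e2 = 1 \<and> gmet G p e1 e2 = 0"

text \<open>Orientation of R^4 given by a sign eps (1 = standard orientation, -1 = opposite);
  (e1,e2) is a positively oriented frame of H iff (k+,k-,e1,e2) is positively oriented.\<close>
definition posONframe :: "(pt \<Rightarrow> real^4^4) \<Rightarrow> (pt \<Rightarrow> pt) \<Rightarrow> (pt \<Rightarrow> pt) \<Rightarrow> real \<Rightarrow> pt \<Rightarrow> pt \<Rightarrow> pt \<Rightarrow> bool" where
  "posONframe G kp km eps p e1 e2 \<longleftrightarrow> ONframe G kp km p e1 e2 \<and>
     eps * det (vector [kp p, km p, e1, e2] :: real^4^4) > 0"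

definition Jop :: "(pt \<Rightarrow> real^4^4) \<Rightarrow> (pt \<Rightarrow> pt) \<Rightarrow> (pt \<Rightarrow> pt) \<Rightarrow> real \<Rightarrow> pt \<Rightarrow> pt \<Rightarrow> pt" where
  "Jop G kp km eps p = (THE Jm. linear Jm \<and> Jm (kp p) = km p \<and> Jm (km p) = - kp p \<and>
     (\<forall>e1 e2. posONframe G kp km eps p e1 e2 \<longrightarrow> Jm e1 = e2 \<and> Jm e2 = - e1))"

text \<open>Trace-free symmetric part nabla^o X of H -> H, v |-> (nabla_v X)^H.\<close>
definition bsym :: "(pt \<Rightarrow> real^4^4) \<Rightarrow> (pt \<Rightarrow> pt) \<Rightarrow> pt \<Rightarrow> pt \<Rightarrow> pt \<Rightarrow> real" where
  "bsym G X p v w = (gmet G p (covd G X p v) w + gmet G p (covd G X p w) v) / 2"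

definition trH :: "(pt \<Rightarrow> real^4^4) \<Rightarrow> (pt \<Rightarrow> pt) \<Rightarrow> (pt \<Rightarrow> pt) \<Rightarrow> (pt \<Rightarrow> pt) \<Rightarrow> pt \<Rightarrow> real" where
  "trH G kp km X p = (let (e1, e2) = (SOME (e1, e2). ONframe G kp km p e1 e2)
     in bsym G X p e1 e1 + bsym G X p e2 e2)"

definition nabla0 :: "(pt \<Rightarrow> real^4^4) \<Rightarrow> (pt \<Rightarrow> pt) \<Rightarrow> (pt \<Rightarrow> pt) \<Rightarrow> (pt \<Rightarrow> pt) \<Rightarrow> pt \<Rightarrow> pt \<Rightarrow> pt" where
  "nabla0 G kp km X p v = (THE a. a \<in> Hsp G kp km p \<and>
     (\<forall>w\<in>Hsp G kp km p. gmet G p a w = bsym G X p v w - trH G kp km X p / 2 * gmet G p v w))"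

definition admissible :: "(pt \<Rightarrow> real^4^4) \<Rightarrow> real \<Rightarrow> (pt \<Rightarrow> pt) \<Rightarrow> (pt \<Rightarrow> pt) \<Rightarrow> bool" where
  "admissible G eps kp km \<longleftrightarrow>
     semi_riemannian G \<and> eps \<in> {1, -1} \<and> smoothV kp \<and> smoothV km \<and>
     (\<forall>p a b. a *\<^sub>R kp p + b *\<^sub>R km p = 0 \<longrightarrow> a = 0 \<and> b = 0) \<and>
     (\<forall>p. \<forall>w\<in>Hsp G kp km p. w \<noteq> 0 \<longrightarrow> gmet G p w w > 0) \<and>
     (\<forall>W. smoothV W \<and> (\<forall>q. W q \<in> Hsp G kp km q) \<longrightarrow>
        (\<forall>q. lie kp W q \<in> Hsp G kp km q \<and> lie km W q \<in> Hsp G kp km q)) \<and>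
     (\<forall>p. \<forall>v\<in>Hsp G kp km p. Jop G kp km eps p (nabla0 G kp km kp p v) = nabla0 G kp km km p v) \<and>
     (\<exists>l tau. smoothR l \<and> smoothR tau \<and> (\<forall>p. km p = l p *\<^sub>R grad G tau p)) \<and>
     (\<forall>p. grad G (\<lambda>q. gmet G q (kp q) (km q)) p \<in> Vsp kp km p) \<and>
     (\<forall>p. grad G (\<lambda>q. gmet G q (kp q) (kp q)) p \<in> Vsp kp km p)"

definition dform1 :: "(pt \<Rightarrow> real^4) \<Rightarrow> pt \<Rightarrow> pt \<Rightarrow> pt \<Rightarrow> real" where
  "dform1 a p v w = (\<Sum>i\<in>UNIV. \<Sum>j\<in>UNIV.
      (pd (\<lambda>q. a q $ j) p i - pd (\<lambda>q. a q $ i) p j) * v $ i * w $ j)"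

definition flat :: "(pt \<Rightarrow> real^4^4) \<Rightarrow> (pt \<Rightarrow> pt) \<Rightarrow> pt \<Rightarrow> real^4" where
  "flat G X p = (\<chi> i. gmet G p (X p) (axis i 1))"

text \<open>Kaehler pair (gK, J) on all of R^4: J a complex structure (almost complex and
  Nijenhuis tensor zero), gK a smooth Riemannian metric, J-invariant, with closed
  fundamental 2-form omega(X,Y) = gK(JX,Y).\<close>
definition kaehler :: "(pt \<Rightarrow> pt \<Rightarrow> pt \<Rightarrow> real) \<Rightarrow> (pt \<Rightarrow> pt \<Rightarrow> pt) \<Rightarrow> bool" where
  "kaehler gK J \<longleftrightarrow>
     (\<forall>i k. smoothR (\<lambda>p. J p (axis i 1) $ k)) \<and>
     (\<forall>i j. smoothR (\<lambda>p. gK p (axis i 1) (axis j 1))) \<and>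
     (\<forall>p. linear (J p) \<and> (\<forall>v. J p (J p v) = - v)) \<and>
     (\<forall>p. bilinear (gK p) \<and> (\<forall>v w. gK p v w = gK p w v) \<and> (\<forall>v. v \<noteq> 0 \<longrightarrow> gK p v v > 0)) \<and>
     (\<forall>p v w. gK p (J p v) (J p w) = gK p v w) \<and>
     (\<forall>X Y. smoothV X \<and> smoothV Y \<longrightarrow>
        (let JX = (\<lambda>q. J q (X q)); JY = (\<lambda>q. J q (Y q)) in
         \<forall>p. lie JX JY p - J p (lie JX Y p) - J p (lie X JY p) - lie X Y p = 0)) \<and>
     (\<forall>X Y Z. smoothV X \<and> smoothV Y \<and> smoothV Z \<longrightarrow>
        (let om = (\<lambda>A B q. gK q (J q (A q)) (B q)) in
         \<forall>p. vder X (om Y Z) p - vder Y (om X Z) p + vder Z (om X Y) p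
             - om (lie X Y) Z p + om (lie X Z) Y p - om (lie Y Z) X p = 0))"

definition Zf :: "pt \<Rightarrow> pt" where
  "Zf p = (let H = - (cx p)\<^sup>2 - (cy p)\<^sup>2; k = - cy p; h = cx p in
     ((H + k\<^sup>2 + h\<^sup>2) / 2) *\<^sub>R dv - du + k *\<^sub>R dx + h *\<^sub>R dy)"

definition Xf :: "pt \<Rightarrow> pt" where "Xf p = (- cy p) *\<^sub>R dv + dx"
definition Yf :: "pt \<Rightarrow> pt" where "Yf p = (cx p) *\<^sub>R dv + dy"

end

theory Submission
  imports Defs
begin


lemma pd_hasd:
  assumes "(f has_derivative D) (at p)"
  shows "pd f p i = D (axis i 1)"
proof -
  have l: "linear D" using assms has_derivative_linear by blast
  have h1: "((\<lambda>t::real. p + t *\<^sub>R axis i 1) has_derivative (\<lambda>t. t *\<^sub>R axis i 1)) (at 0)"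
    by (auto intro!: derivative_eq_intros)
  have h2: "(f has_derivative D) (at (p + 0 *\<^sub>R axis i 1))" using assms by simp
  have "((\<lambda>t. f (p + t *\<^sub>R axis i 1)) has_derivative (\<lambda>t. D (t *\<^sub>R axis i 1))) (at 0)"
    using has_derivative_compose[OF h1 h2] by simp
  moreover have "(\<lambda>t. D (t *\<^sub>R axis i 1)) = (\<lambda>t. D (axis i 1) * t)"
    using l by (auto simp: linear_scale mult.commute)
  ultimately have "((\<lambda>t. f (p + t *\<^sub>R axis i 1)) has_real_derivative D (axis i 1)) (at 0)"
    by (simp add: has_field_derivative_def)
  then show ?thesis unfolding pd_def by (rule DERIV_imp_deriv)
qed

lemma pd_const[simp]: "pd (\<lambda>q. c) p i = 0"
  by (rule pd_hasd[where D="\<lambda>_. 0", simplified]) (rule has_derivative_const)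

lemma pd_coord[simp]: "pd (\<lambda>q. q $ j) p i = (if j = i then 1 else 0)"
proof -
  have "((\<lambda>q::pt. q $ j) has_derivative (\<lambda>q. q $ j)) (at p)"
    by (rule bounded_linear_imp_has_derivative) (rule bounded_linear_vec_nth)
  from pd_hasd[OF this] show ?thesis by (simp add: axis_def)
qed

lemma pd_add[simp]:
  assumes "f differentiable (at p)" "g differentiable (at p)"
  shows "pd (\<lambda>q. f q + g q) p i = pd f p i + pd g p i"
proof -
  obtain D E where D: "(f has_derivative D) (at p)" and E: "(g has_derivative E) (at p)"
    using assms unfolding differentiable_def by blast
  show ?thesis using pd_hasd[OF has_derivative_add[OF D E]] pd_hasd[OF D] pd_hasd[OF E] by simp
qed

lemma pd_mult[simp]:
  assumes "f differentiable (at p)" "g differentiable (at p)"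
  shows "pd (\<lambda>q. f q * g q) p i = f p * pd g p i + pd f p i * g p"
proof -
  obtain D E where D: "(f has_derivative D) (at p)" and E: "(g has_derivative E) (at p)"
    using assms unfolding differentiable_def by blast
  show ?thesis using pd_hasd[OF has_derivative_mult[OF D E]] pd_hasd[OF D] pd_hasd[OF E] by simp
qed

lemma pd_uminus[simp]:
  assumes "f differentiable (at p)"
  shows "pd (\<lambda>q. - f q) p i = - pd f p i"
proof -
  obtain D where D: "(f has_derivative D) (at p)"
    using assms unfolding differentiable_def by blast
  show ?thesis using pd_hasd[OF has_derivative_minus[OF D]] pd_hasd[OF D] by simp
qed

lemma pd_diff[simp]:
  assumes "f differentiable (at p)" "g differentiable (at p)"
  shows "pd (\<lambda>q. f q - g q) p i = pd f p i - pd g p i"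
proof -
  obtain D E where D: "(f has_derivative D) (at p)" and E: "(g has_derivative E) (at p)"
    using assms unfolding differentiable_def by blast
  show ?thesis using pd_hasd[OF has_derivative_diff[OF D E]] pd_hasd[OF D] pd_hasd[OF E] by simp
qed

lemma pd_exp[simp]: "pd (\<lambda>q. exp (q $ 1)) p i = (if i = 1 then exp (p $ 1) else 0)"
proof -
  have "((\<lambda>q::pt. exp (q $ 1)) has_derivative (\<lambda>h. exp (p $ 1) * h $ 1)) (at p)"
    by (auto intro!: derivative_eq_intros bounded_linear_imp_has_derivative)
  from pd_hasd[OF this] show ?thesis by (auto simp: axis_def)
qed

lemma pd_sum:
  assumes "finite S" "\<And>s. s \<in> S \<Longrightarrow> f s differentiable (at p)"
  shows "pd (\<lambda>q. \<Sum>s\<in>S. f s q) p i = (\<Sum>s\<in>S. pd (f s) p i)"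
  using assms
proof (induction S rule: finite_induct)
  case empty then show ?case by simp
next
  case (insert x F)
  have d: "(\<lambda>q. \<Sum>s\<in>F. f s q) differentiable (at p)"
    using insert by (intro differentiable_sum) auto
  have "pd (\<lambda>q. \<Sum>s\<in>insert x F. f s q) p i = pd (\<lambda>q. f x q + (\<Sum>s\<in>F. f s q)) p i"
    using insert by simp
  also have "\<dots> = pd (f x) p i + pd (\<lambda>q. \<Sum>s\<in>F. f s q) p i"
    using insert d by (subst pd_add) auto
  finally show ?case using insert by simp
qed

inductive PE :: "(pt \<Rightarrow> real) \<Rightarrow> bool" where
  PE_const: "PE (\<lambda>q. c)"
| PE_coord: "PE (\<lambda>q. q $ i)"
| PE_exp: "PE (\<lambda>q. exp (q $ 1))"
| PE_add: "PE f \<Longrightarrow> PE g \<Longrightarrow> PE (\<lambda>q. f q + g q)"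
| PE_mult: "PE f \<Longrightarrow> PE g \<Longrightarrow> PE (\<lambda>q. f q * g q)"

lemma PE_uminus: "PE f \<Longrightarrow> PE (\<lambda>q. - f q)"
  using PE_mult[OF PE_const[of "-1"], of f] by simp

lemma PE_diff: "PE f \<Longrightarrow> PE g \<Longrightarrow> PE (\<lambda>q. f q - g q)"
  using PE_add[OF _ PE_uminus[of g], of f] by simp

lemmas PE_intros[simp] = PE_const PE_coord PE_exp PE_add PE_mult PE_uminus PE_diff

lemma PE_differentiable[simp]: "PE f \<Longrightarrow> f differentiable (at p)"
proof (induction rule: PE.induct)
  case (PE_coord i)
  show ?case using bounded_linear_imp_differentiable[OF bounded_linear_vec_nth] .
next
  case PE_exp
  have "((\<lambda>q::pt. exp (q $ 1)) has_derivative (\<lambda>h. exp (p $ 1) * h $ 1)) (at p)"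
    by (auto intro!: derivative_eq_intros bounded_linear_imp_has_derivative)
  then show ?case unfolding differentiable_def by blast
qed auto

lemma PE_pd: "PE f \<Longrightarrow> PE (\<lambda>p. pd f p i)"
proof (induction rule: PE.induct)
  case PE_exp
  show ?case by (cases "i = 1") auto
qed auto

lemma PE_smooth: "PE f \<Longrightarrow> smoothR f"
proof (coinduction arbitrary: f rule: smoothR.coinduct)
  case (smoothR f)
  then show ?case using PE_pd by auto
qed

lemma smoothR_diff: "smoothR f \<Longrightarrow> f differentiable (at p)"
  by (erule smoothR.cases) auto

lemma det_4:
  "det (A::real^4^4) =
  A$1$1*A$2$2*A$3$3*A$4$4 - A$1$1*A$2$2*A$3$4*A$4$3 - A$1$1*A$2$3*A$3$2*A$4$4
 + A$1$1*A$2$3*A$3$4*A$4$2 + A$1$1*A$2$4*A$3$2*A$4$3 - A$1$1*A$2$4*A$3$3*A$4$2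
 - A$1$2*A$2$1*A$3$3*A$4$4 + A$1$2*A$2$1*A$3$4*A$4$3 + A$1$2*A$2$3*A$3$1*A$4$4
 - A$1$2*A$2$3*A$3$4*A$4$1 - A$1$2*A$2$4*A$3$1*A$4$3 + A$1$2*A$2$4*A$3$3*A$4$1
 + A$1$3*A$2$1*A$3$2*A$4$4 - A$1$3*A$2$1*A$3$4*A$4$2 - A$1$3*A$2$2*A$3$1*A$4$4
 + A$1$3*A$2$2*A$3$4*A$4$1 + A$1$3*A$2$4*A$3$1*A$4$2 - A$1$3*A$2$4*A$3$2*A$4$1
 - A$1$4*A$2$1*A$3$2*A$4$3 + A$1$4*A$2$1*A$3$3*A$4$2 + A$1$4*A$2$2*A$3$1*A$4$3
 - A$1$4*A$2$2*A$3$3*A$4$1 - A$1$4*A$2$3*A$3$1*A$4$2 + A$1$4*A$2$3*A$3$2*A$4$1"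
proof -
  have f1: "finite {2::4, 3, 4}" "1 \<notin> {2::4, 3, 4}" by auto
  have f2: "finite {3::4, 4}" "2 \<notin> {3::4, 4}" by auto
  have f3: "finite {4::4}" "3 \<notin> {4::4}" by auto
  show ?thesis
    unfolding det_def UNIV_4
    unfolding sum_over_permutations_insert[OF f1]
    unfolding sum_over_permutations_insert[OF f2]
    unfolding sum_over_permutations_insert[OF f3]
    unfolding permutes_sing
    by (simp add: sign_swap_id permutation_swap_id permutation_compose sign_compose sign_id swap_id_eq algebra_simps)
qed




lemma mat4_eq: "((A::real^4^4) = B) \<longleftrightarrow> A$1$1 = B$1$1 \<and> A$1$2 = B$1$2 \<and> A$1$3 = B$1$3 \<and> A$1$4 = B$1$4 \<and> A$2$1 = B$2$1 \<and> A$2$2 = B$2$2 \<and> A$2$3 = B$2$3 \<and> A$2$4 = B$2$4 \<and> A$3$1 = B$3$1 \<and> A$3$2 = B$3$2 \<and> A$3$3 = B$3$3 \<and> A$3$4 = B$3$4 \<and> A$4$1 = B$4$1 \<and> A$4$2 = B$4$2 \<and> A$4$3 = B$4$3 \<and> A$4$4 = B$4$4"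
  by (simp add: vec_eq_iff forall_4 conj_ac)

lemma vec4_eq: "((v::real^4) = w) \<longleftrightarrow> v$1 = w$1 \<and> v$2 = w$2 \<and> v$3 = w$3 \<and> v$4 = w$4"
  by (simp add: vec_eq_iff forall_4)

definition Ginv :: "pt \<Rightarrow> real^4^4" where
  "Ginv p = (\<chi> i j. if (i = 1 \<and> j = 2) \<or> (i = 2 \<and> j = 1) then 1
     else if i = 2 \<and> j = 2 then p$3*p$3 + p$4*p$4
     else if i = j \<and> (i = 3 \<or> i = 4) then 1 else 0)"

lemma G_nth: "ppwave p $ i $ j = (if i = 1 \<and> j = 1 then - (p$3*p$3 + p$4*p$4)
     else if (i = 1 \<and> j = 2) \<or> (i = 2 \<and> j = 1) then 1
     else if i = j \<and> (i = 3 \<or> i = 4) then 1 else 0)"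
  by (simp add: ppwave_def cx_def cy_def power2_eq_square)

lemma G_Ginv: "ppwave p ** Ginv p = mat 1" "Ginv p ** ppwave p = mat 1"
  by (simp_all add: mat4_eq matrix_matrix_mult_def sum_4 G_nth Ginv_def mat_def)

lemma Ginv_eq: "matrix_inv (ppwave p) = Ginv p"
proof -
  have "\<exists>A'. ppwave p ** A' = mat 1 \<and> A' ** ppwave p = mat 1" using G_Ginv by blast
  then have h: "ppwave p ** matrix_inv (ppwave p) = mat 1 \<and> matrix_inv (ppwave p) ** ppwave p = mat 1"
    unfolding matrix_inv_def by (rule someI_ex)
  have "matrix_inv (ppwave p) = matrix_inv (ppwave p) ** (ppwave p ** Ginv p)"
    using G_Ginv by simp
  also have "\<dots> = Ginv p" using h by (simp add: matrix_mul_assoc)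
  finally show ?thesis .
qed

lemma dv_nth: "dv $ k = (if k = 2 then 1 else 0)" by (simp add: dv_def axis_def)
lemma du_nth: "du $ k = (if k = 1 then 1 else 0)" by (simp add: du_def axis_def)
lemma dx_nth: "dx $ k = (if k = 3 then 1 else 0)" by (simp add: dx_def axis_def)
lemma dy_nth: "dy $ k = (if k = 4 then 1 else 0)" by (simp add: dy_def axis_def)

lemma Zf_nth: "Zf p $ k = (if k = 1 then -1 else if k = 3 then - p$4 else if k = 4 then p$3 else 0)"
  by (simp add: Zf_def Let_def cx_def cy_def dv_nth du_nth dx_nth dy_nth)

lemma Xf_nth: "Xf p $ k = (if k = 2 then - p$4 else if k = 3 then 1 else 0)"
  by (simp add: Xf_def cy_def dv_nth dx_nth)

lemma Yf_nth: "Yf p $ k = (if k = 2 then p$3 else if k = 4 then 1 else 0)"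
  by (simp add: Yf_def cx_def dv_nth dy_nth)

lemma grad_cu: "grad ppwave cu = (\<lambda>p. dv)"
proof
  fix p
  have "(\<lambda>q. q $ 1) = cu" by (auto simp: cu_def)
  then have "\<And>i. pd cu p i = (if i = 1 then 1 else 0)" using pd_coord[of 1] by (metis (no_types))
  then show "grad ppwave cu p = dv"
    by (simp add: grad_def Ginv_eq vec4_eq matrix_vector_mult_def sum_4 Ginv_def dv_nth)
qed

lemma gmet_pp: "gmet ppwave p v w = -(p$3*p$3+p$4*p$4)* v$1*w$1 + v$1*w$2 + v$2*w$1 + v$3*w$3 + v$4*w$4"
  by (simp add: gmet_def inner_vec_def matrix_vector_mult_def sum_4 G_nth algebra_simps)

definition JM :: "pt \<Rightarrow> real^4^4" where
 "JM p = (let x = p$3; y = p$4; r = x*x+y*y in (\<chi> k j.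
   if k = 1 then (if j = 1 then -r else if j = 2 then 1 else if j = 3 then y else -x)
   else if k = 2 then (if j = 1 then -1 else if j = 2 then 0 else if j = 3 then x else y)
   else if k = 3 then (if j = 1 then -x - r*y else if j = 2 then y else if j = 3 then y*y else -1-x*y)
   else (if j = 1 then -y + r*x else if j = 2 then -x else if j = 3 then 1 - x*y else x*x)))"

lemma JMv: "JM p *v w = (\<chi> k.
   if k = 1 then -(p$3*p$3+p$4*p$4) * w$1 + w$2 + p$4 * w$3 - p$3 * w$4
   else if k = 2 then - w$1 + p$3 * w$3 + p$4 * w$4
   else if k = 3 then (-p$3 - (p$3*p$3+p$4*p$4)*p$4) * w$1 + p$4 * w$2 + p$4*p$4*w$3 + (-1-p$3*p$4) * w$4
   else (-p$4 + (p$3*p$3+p$4*p$4)*p$3) * w$1 - p$3 * w$2 + (1 - p$3*p$4) * w$3 + p$3*p$3*w$4)"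
  by (simp add: vec4_eq matrix_vector_mult_def sum_4 JM_def Let_def)

lemma frame_rot:
  fixes a3 a4 b3 b4 :: real
  assumes "a3*a3 + a4*a4 = 1" "b3*b3 + b4*b4 = 1" "a3*b3 + a4*b4 = 0" "a3*b4 - a4*b3 > 0"
  shows "b3 = -a4 \<and> b4 = a3"
proof -
  define s where "s = a3*b4 - a4*b3"
  have c: "b3 = - a4 * s"
  proof -
    have "(a3*a3 + a4*a4) * b3 = a3*(a3*b3 + a4*b4) - a4 * s" unfolding s_def by algebra
    then show ?thesis using assms by simp
  qed
  have d: "b4 = a3 * s"
  proof -
    have "(a3*a3 + a4*a4) * b4 = a4*(a3*b3 + a4*b4) + a3 * s" unfolding s_def by algebra
    then show ?thesis using assms by simp
  qed
  have "s * s * (a3*a3 + a4*a4) = 1" using assms(2) c d by (simp add: algebra_simps)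
  then have "s * s = 1" using assms(1) by simp
  then have "(s - 1) * (s + 1) = 0" by (simp add: algebra_simps)
  moreover have "s > 0" using assms(4) s_def by simp
  ultimately have "s = 1" by simp
  then show ?thesis using c d by simp
qed


lemma Jop_eq: "Jop ppwave Zf (\<lambda>p. dv) (-1) p = (\<lambda>w. JM p *v w)"
  unfolding Jop_def
proof (rule the_equality)
  show "linear (\<lambda>w. JM p *v w) \<and> JM p *v Zf p = dv \<and> JM p *v dv = - Zf p \<and>
     (\<forall>e1 e2. posONframe ppwave Zf (\<lambda>p. dv) (-1) p e1 e2 \<longrightarrow> JM p *v e1 = e2 \<and> JM p *v e2 = - e1)"
  proof (intro conjI allI impI)
    show "linear (\<lambda>w. JM p *v w)" by (rule matrix_vector_mul_linear)
    show "JM p *v Zf p = dv" by (simp add: JMv vec4_eq Zf_nth dv_nth algebra_simps)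
    show "JM p *v dv = - Zf p" by (simp add: JMv vec4_eq Zf_nth dv_nth)
  next
    fix e1 e2 assume "posONframe ppwave Zf (\<lambda>p. dv) (-1) p e1 e2"
    then have o: "ONframe ppwave Zf (\<lambda>p. dv) p e1 e2" and dt: "- det (vector [Zf p, dv, e1, e2] :: real^4^4) > 0"
      by (auto simp: posONframe_def)
    from o have h0: "e1$1 = 0" "e2$1 = 0"
      by (auto simp: ONframe_def Hsp_def gmet_pp dv_nth)
    from o h0 have h1: "e1$2 = - p$4 * e1$3 + p$3 * e1$4" "e2$2 = - p$4 * e2$3 + p$3 * e2$4"
      by (auto simp: ONframe_def Hsp_def gmet_pp Zf_nth algebra_simps)
    from o h0 have h2: "e1$3*e1$3 + e1$4*e1$4 = 1" "e2$3*e2$3 + e2$4*e2$4 = 1" "e1$3*e2$3 + e1$4*e2$4 = 0"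
      by (auto simp: ONframe_def Hsp_def gmet_pp)
    have "det (vector [Zf p, dv, e1, e2] :: real^4^4) = - (e1$3*e2$4 - e1$4*e2$3)"
      using h0 by (simp add: det_4 vector_def Zf_nth dv_nth)
    with dt have h3: "e1$3*e2$4 - e1$4*e2$3 > 0" by simp
    note h = h0 h1 h2 h3
    from frame_rot[OF h(5-8)] have r: "e2$3 = - e1$4" "e2$4 = e1$3" by auto
    show "JM p *v e1 = e2" "JM p *v e2 = - e1"
      by (simp_all add: JMv vec4_eq h0 h1 r algebra_simps)
  qed
next
  fix Jm assume a: "linear Jm \<and> Jm (Zf p) = dv \<and> Jm dv = - Zf p \<and>
     (\<forall>e1 e2. posONframe ppwave Zf (\<lambda>p. dv) (-1) p e1 e2 \<longrightarrow> Jm e1 = e2 \<and> Jm e2 = - e1)"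
  have pf: "posONframe ppwave Zf (\<lambda>p. dv) (-1) p (Xf p) (Yf p)"
    by (simp add: posONframe_def ONframe_def Hsp_def gmet_pp Zf_nth dv_nth Xf_nth Yf_nth det_4 vector_def)
  then have JX: "Jm (Xf p) = Yf p" and JY: "Jm (Yf p) = - Xf p" using a by auto
  have lin: "linear Jm" using a by simp
  show "Jm = (\<lambda>w. JM p *v w)"
  proof
    fix w
    let ?x = "p$3" and ?y = "p$4"
    have dec: "w = (- w$1) *\<^sub>R Zf p + (w$2 - (?x*?x+?y*?y)*w$1 + ?y*w$3 - ?x*w$4) *\<^sub>R dv
        + (w$3 - ?y*w$1) *\<^sub>R Xf p + (w$4 + ?x*w$1) *\<^sub>R Yf p"
      by (simp add: vec4_eq Zf_nth dv_nth Xf_nth Yf_nth algebra_simps)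
    have "Jm w = (- w$1) *\<^sub>R Jm (Zf p) + (w$2 - (?x*?x+?y*?y)*w$1 + ?y*w$3 - ?x*w$4) *\<^sub>R Jm dv
        + (w$3 - ?y*w$1) *\<^sub>R Jm (Xf p) + (w$4 + ?x*w$1) *\<^sub>R Jm (Yf p)"
      by (subst dec) (simp add: linear_add[OF lin] linear_scale[OF lin] linear_diff[OF lin] linear_neg[OF lin])
    also have "\<dots> = JM p *v w"
      using a JX JY by (simp add: JMv vec4_eq Zf_nth dv_nth Xf_nth Yf_nth algebra_simps)
    finally show "Jm w = JM p *v w" .
  qed
qed



lemma pdG: "pd (\<lambda>q. ppwave q $ j $ l) p i =
   (if j = 1 \<and> l = 1 then (if i = 3 then -2*p$3 else if i = 4 then -2*p$4 else 0) else 0)"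
proof (cases "j = 1 \<and> l = 1")
  case True
  then have "(\<lambda>q. ppwave q $ j $ l) = (\<lambda>q. - (q$3*q$3 + q$4*q$4))" by (auto simp: G_nth)
  then show ?thesis using True by auto
next
  case False
  then have "(\<lambda>q. ppwave q $ j $ l) = (\<lambda>q. ppwave 0 $ j $ l)" by (auto simp: G_nth)
  then show ?thesis using False by auto
qed

definition CH :: "pt \<Rightarrow> 4 \<Rightarrow> 4 \<Rightarrow> 4 \<Rightarrow> real" where
  "CH p k i j = (if k = 2 \<and> ((i = 1 \<and> j = 3) \<or> (i = 3 \<and> j = 1)) then - p$3
     else if k = 2 \<and> ((i = 1 \<and> j = 4) \<or> (i = 4 \<and> j = 1)) then - p$4
     else if k = 3 \<and> i = 1 \<and> j = 1 then p$3
     else if k = 4 \<and> i = 1 \<and> j = 1 then p$4 else 0)"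

lemma christ_pp: "christ ppwave p k i j = CH p k i j"
  unfolding christ_def Ginv_eq sum_4 pdG
  using exhaust_4[of k] exhaust_4[of i] exhaust_4[of j]
  by (elim disjE) (simp_all add: Ginv_def CH_def)

lemma covd_Z: "covd ppwave Zf p v = (\<chi> k. if k = 2 then p$3 * v$3 + p$4 * v$4
   else if k = 3 then - p$3 * v$1 - v$4 else if k = 4 then - p$4 * v$1 + v$3 else 0)"
  by (simp add: covd_def christ_pp vec4_eq sum_4 Zf_nth CH_def algebra_simps)

lemma covd_dv: "covd ppwave (\<lambda>p. dv) p v = 0"
  by (simp add: covd_def christ_pp vec4_eq sum_4 dv_nth CH_def)

lemma bsym_Z: "bsym ppwave Zf p v w = 0"
  by (simp add: bsym_def covd_Z gmet_pp algebra_simps)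

lemma bsym_dv: "bsym ppwave (\<lambda>p. dv) p v w = 0"
  by (simp add: bsym_def covd_dv gmet_def)

lemma nabla0_zero:
  assumes b: "\<And>v w. bsym G X p v w = 0"
    and pos: "\<forall>w\<in>Hsp G kp km p. w \<noteq> 0 \<longrightarrow> gmet G p w w > 0"
  shows "nabla0 G kp km X p v = 0"
  unfolding nabla0_def
proof (rule the_equality)
  have t: "trH G kp km X p = 0" by (simp add: trH_def b split_beta)
  show "0 \<in> Hsp G kp km p \<and> (\<forall>w\<in>Hsp G kp km p. gmet G p 0 w = bsym G X p v w - trH G kp km X p / 2 * gmet G p v w)"
    by (simp add: Hsp_def gmet_def b t)
next
  fix a assume "a \<in> Hsp G kp km p \<and> (\<forall>w\<in>Hsp G kp km p. gmet G p a w = bsym G X p v w - trH G kp km X p / 2 * gmet G p v w)"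
  then have "a \<in> Hsp G kp km p" "gmet G p a a = 0" by (auto simp: b trH_def split_beta)
  then show "a = 0" using pos by fastforce
qed

lemma Hsp_pp: "w \<in> Hsp ppwave Zf (\<lambda>p. dv) p \<longleftrightarrow> w$1 = 0 \<and> w$2 = - p$4 * w$3 + p$3 * w$4"
  by (auto simp: Hsp_def gmet_pp Zf_nth dv_nth algebra_simps)

lemma Hsp_pos: "\<forall>w\<in>Hsp ppwave Zf (\<lambda>p. dv) p. w \<noteq> 0 \<longrightarrow> gmet ppwave p w w > 0"
proof (intro ballI impI)
  fix w assume h: "w \<in> Hsp ppwave Zf (\<lambda>p. dv) p" "w \<noteq> 0"
  then have a: "w$1 = 0" "w$2 = - p$4 * w$3 + p$3 * w$4" by (auto simp: Hsp_pp)
  have "w$3 \<noteq> 0 \<or> w$4 \<noteq> 0"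
  proof (rule ccontr)
    assume "\<not> (w$3 \<noteq> 0 \<or> w$4 \<noteq> 0)"
    then have "w = 0" using a by (simp add: vec4_eq)
    then show False using h by simp
  qed
  then have "w$3 * w$3 + w$4 * w$4 > 0"
    by (simp add: sum_squares_gt_zero_iff)
  then show "gmet ppwave p w w > 0" using a by (simp add: gmet_pp)
qed

lemma lie_cond:
  assumes sW: "smoothV W" and hW: "\<forall>q. W q \<in> Hsp ppwave Zf (\<lambda>p. dv) q"
  shows "lie Zf W q \<in> Hsp ppwave Zf (\<lambda>p. dv) q \<and> lie (\<lambda>p. dv) W q \<in> Hsp ppwave Zf (\<lambda>p. dv) q"
proof -
  have d: "\<And>k p. (\<lambda>q. W q $ k) differentiable (at p)"
    using sW smoothR_diff unfolding smoothV_def by blast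
  have w1: "\<And>q. W q $ 1 = 0" and w2: "\<And>q. W q $ 2 = - q$4 * W q $3 + q$3 * W q $ 4"
    using hW by (auto simp: Hsp_pp)
  show ?thesis
    by (simp add: Hsp_pp lie_def vder_def sum_4 Zf_nth dv_nth w1 w2 d algebra_simps)
qed

lemma adm: "admissible ppwave (-1) Zf (\<lambda>p. dv)"
  unfolding admissible_def
proof (intro conjI)
  show "semi_riemannian ppwave"
    unfolding semi_riemannian_def
  proof (intro conjI allI)
    fix i j
    have "\<forall>i j. PE (\<lambda>p. ppwave p $ i $ j)" by (simp add: forall_4 G_nth)
    then show "smoothR (\<lambda>p. ppwave p $ i $ j)" using PE_smooth by blast
  next
    fix p
    show "transpose (ppwave p) = ppwave p" by (simp add: mat4_eq transpose_def G_nth)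
    show "det (ppwave p) \<noteq> 0" by (simp add: det_4 G_nth)
  qed
  show "(-1::real) \<in> {1, -1}" by simp
  have "\<forall>k. PE (\<lambda>p. Zf p $ k)" by (simp add: forall_4 Zf_nth)
  then show "smoothV Zf" unfolding smoothV_def using PE_smooth by blast
  show "smoothV (\<lambda>p. dv)" unfolding smoothV_def using PE_smooth PE_const by blast
  show "\<forall>p a b. a *\<^sub>R Zf p + b *\<^sub>R dv = 0 \<longrightarrow> a = 0 \<and> b = 0"
    by (simp add: vec4_eq Zf_nth dv_nth)
  show "\<forall>p. \<forall>w\<in>Hsp ppwave Zf (\<lambda>p. dv) p. w \<noteq> 0 \<longrightarrow> gmet ppwave p w w > 0"
    using Hsp_pos by blast
  show "\<forall>W. smoothV W \<and> (\<forall>q. W q \<in> Hsp ppwave Zf (\<lambda>p. dv) q) \<longrightarrow>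
        (\<forall>q. lie Zf W q \<in> Hsp ppwave Zf (\<lambda>p. dv) q \<and> lie (\<lambda>p. dv) W q \<in> Hsp ppwave Zf (\<lambda>p. dv) q)"
    using lie_cond by blast
  show "\<forall>p. \<forall>v\<in>Hsp ppwave Zf (\<lambda>p. dv) p. Jop ppwave Zf (\<lambda>p. dv) (-1) p (nabla0 ppwave Zf (\<lambda>p. dv) Zf p v) = nabla0 ppwave Zf (\<lambda>p. dv) (\<lambda>p. dv) p v"
    by (simp add: nabla0_zero[OF bsym_Z Hsp_pos] nabla0_zero[OF bsym_dv Hsp_pos] Jop_eq)
  show "\<exists>l tau. smoothR l \<and> smoothR tau \<and> (\<forall>p. dv = l p *\<^sub>R grad ppwave tau p)"
  proof (intro exI conjI allI)
    show "smoothR (\<lambda>p. 1::real)" using PE_smooth PE_const by blast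
    have "cu = (\<lambda>q. q $ 1)" by (auto simp: cu_def)
    then show "smoothR cu" using PE_smooth PE_coord by metis
    fix p show "dv = 1 *\<^sub>R grad ppwave cu p" by (simp add: grad_cu)
  qed
  have c1: "(\<lambda>q. gmet ppwave q (Zf q) dv) = (\<lambda>q. -1)" by (simp add: gmet_pp Zf_nth dv_nth)
  have c2: "(\<lambda>q. gmet ppwave q (Zf q) (Zf q)) = (\<lambda>q. 0)" by (simp add: gmet_pp Zf_nth algebra_simps)
  have z: "(\<chi> i. (0::real)) = (0::pt)" by (simp add: vec_eq_iff)
  show "\<forall>p. grad ppwave (\<lambda>q. gmet ppwave q (Zf q) dv) p \<in> Vsp Zf (\<lambda>p. dv) p"
    by (simp add: c1 grad_def z span_zero Vsp_def)
  show "\<forall>p. grad ppwave (\<lambda>q. gmet ppwave q (Zf q) (Zf q)) p \<in> Vsp Zf (\<lambda>p. dv) p"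
    by (simp add: c2 grad_def z span_zero Vsp_def)
qed



definition jac :: "(pt \<Rightarrow> pt) \<Rightarrow> pt \<Rightarrow> real^4^4" where
  "jac X p = (\<chi> k i. pd (\<lambda>q. X q $ k) p i)"

definition dmat :: "(pt \<Rightarrow> real^4^4) \<Rightarrow> pt \<Rightarrow> pt \<Rightarrow> real^4^4" where
  "dmat A p v = (\<chi> k j. \<Sum>i\<in>UNIV. v$i * pd (\<lambda>q. A q $ k $ j) p i)"

lemma lie_jac: "lie X Y p = jac Y p *v X p - jac X p *v Y p"
  by (simp add: lie_def vder_def jac_def matrix_vector_mult_def vec_eq_iff mult.commute)

lemma jac_mv:
  assumes dA: "\<And>k j. (\<lambda>q. A q $ k $ j) differentiable (at p)"
    and dX: "\<And>j. (\<lambda>q. X q $ j) differentiable (at p)"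
  shows "jac (\<lambda>q. A q *v X q) p *v v = dmat A p v *v X p + A p *v (jac X p *v v)"
proof -
  have e: "\<And>k. (\<lambda>q. (A q *v X q) $ k) = (\<lambda>q. A q $ k $ 1 * X q $ 1 + A q $ k $ 2 * X q $ 2
       + A q $ k $ 3 * X q $ 3 + A q $ k $ 4 * X q $ 4)"
    by (simp add: matrix_vector_mult_def sum_4)
  show ?thesis
    by (simp add: vec4_eq jac_def dmat_def e matrix_vector_mult_def sum_4 dA dX algebra_simps)
qed

lemma vder_om:
  assumes dA: "\<And>k j. (\<lambda>q. A q $ k $ j) differentiable (at p)"
    and dY: "\<And>j. (\<lambda>q. Y q $ j) differentiable (at p)"
    and dZ: "\<And>j. (\<lambda>q. Z q $ j) differentiable (at p)"
  shows "vder X (\<lambda>q. Y q \<bullet> (A q *v Z q)) p = (jac Y p *v X p) \<bullet> (A p *v Z p)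
     + Y p \<bullet> (dmat A p (X p) *v Z p) + Y p \<bullet> (A p *v (jac Z p *v X p))"
proof -
  have e: "(\<lambda>q. Y q \<bullet> (A q *v Z q)) = (\<lambda>q. \<Sum>i\<in>UNIV. \<Sum>j\<in>UNIV. Y q $ i * (A q $ i $ j * Z q $ j))"
    by (simp add: inner_vec_def matrix_vector_mult_def sum_distrib_left)
  have d1: "\<And>i j. (\<lambda>q. Y q $ i * (A q $ i $ j * Z q $ j)) differentiable (at p)"
    using dA dY dZ by simp
  have d2: "\<And>i. (\<lambda>q. \<Sum>j\<in>UNIV. Y q $ i * (A q $ i $ j * Z q $ j)) differentiable (at p)"
    using d1 by (intro differentiable_sum) auto
  show ?thesis
    unfolding e vder_def
    by (simp add: pd_sum d1 d2 dA dY dZ jac_def dmat_def inner_vec_def matrix_vector_mult_def sum_4 algebra_simps)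
qed

definition FM :: "pt \<Rightarrow> real^4^4" where
  "FM p = (\<chi> i j. exp (p$1) * (
     if i = 1 then (if j = 1 then 0 else if j = 2 then -1 else if j = 3 then -p$4 - 2*p$3 else p$3 - 2*p$4)
     else if i = 2 then (if j = 1 then 1 else 0)
     else if i = 3 then (if j = 1 then p$4 + 2*p$3 else if j = 4 then 2 else 0)
     else (if j = 1 then 2*p$4 - p$3 else if j = 3 then -2 else 0)))"

definition MM :: "pt \<Rightarrow> real^4^4" where
  "MM p = (let x = p$3; y = p$4; r = x*x + y*y in (\<chi> i j. exp (p$1) * (
     if i = 1 then (if j = 1 then (1+r)*(1+r) else if j = 2 then -r else if j = 3 then -y*(r+2) else x*(r+2))
     else if i = 2 then (if j = 1 then -r else if j = 2 then 1 else if j = 3 then y else -x)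
     else if i = 3 then (if j = 1 then -y*(r+2) else if j = 2 then y else if j = 3 then y*y+2 else -x*y)
     else (if j = 1 then x*(r+2) else if j = 2 then -x else if j = 3 then -x*y else x*x+2))))"

lemma flat_nth: "flat ppwave Zf q $ j =
   (if j = 1 then q$3*q$3+q$4*q$4 else if j = 2 then -1 else if j = 3 then - q$4 else q$3)"
  using exhaust_4[of j]
  by (auto simp: flat_def gmet_pp Zf_nth axis_def cu_def algebra_simps)

lemma dform_eq: "dform1 (\<lambda>q. exp (cu q) *\<^sub>R flat ppwave Zf q) p v w = v \<bullet> (FM p *v w)"
  by (simp add: dform1_def flat_nth cu_def sum_4 FM_def inner_vec_def matrix_vector_mult_def algebra_simps)

lemma FJ: "FM p ** JM p = MM p"
  by (simp add: mat4_eq matrix_matrix_mult_def sum_4 FM_def JM_def MM_def Let_def algebra_simps)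

lemma JJ: "JM p *v (JM p *v w) = - w"
  by (simp add: JMv vec4_eq algebra_simps)

lemma MM_sym: "transpose (MM p) = MM p"
  by (simp add: mat4_eq transpose_def MM_def Let_def)

lemma FM_anti: "transpose (FM p) = - FM p"
  by (simp add: mat4_eq transpose_def FM_def algebra_simps)

definition dJx :: "pt \<Rightarrow> 4 \<Rightarrow> 4 \<Rightarrow> real" where
  "dJx p k j = (let x = p$3; y = p$4 in
     if k = 1 then (if j = 1 then -2*x else if j = 4 then -1 else 0)
     else if k = 2 then (if j = 3 then 1 else 0)
     else if k = 3 then (if j = 1 then -1 - 2*x*y else if j = 4 then -y else 0)
     else (if j = 1 then 3*x*x + y*y else if j = 2 then -1 else if j = 3 then -y else 2*x))"

definition dJy :: "pt \<Rightarrow> 4 \<Rightarrow> 4 \<Rightarrow> real" where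
  "dJy p k j = (let x = p$3; y = p$4 in
     if k = 1 then (if j = 1 then -2*y else if j = 3 then 1 else 0)
     else if k = 2 then (if j = 4 then 1 else 0)
     else if k = 3 then (if j = 1 then -x*x - 3*y*y else if j = 2 then 1 else if j = 3 then 2*y else -x)
     else (if j = 1 then -1 + 2*x*y else if j = 3 then -x else 0))"

lemma dmat_JM: "dmat JM p v = (\<chi> k j. v$3 * dJx p k j + v$4 * dJy p k j)"
  by (simp add: mat4_eq dmat_def sum_4 JM_def Let_def dJx_def dJy_def algebra_simps)

lemma Nij: "dmat JM p (JM p *v a) *v b - dmat JM p (JM p *v b) *v a
   + JM p *v (dmat JM p b *v a) - JM p *v (dmat JM p a *v b) = 0"
  by (simp add: dmat_JM JM_def vec4_eq matrix_vector_mult_def sum_4 dJx_def dJy_def Let_def algebra_simps)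

definition dFx :: "4 \<Rightarrow> 4 \<Rightarrow> real" where
  "dFx i j = (if i = 1 then (if j = 3 then -2 else if j = 4 then 1 else 0)
     else if i = 3 then (if j = 1 then 2 else 0) else if i = 4 then (if j = 1 then -1 else 0) else 0)"
definition dFy :: "4 \<Rightarrow> 4 \<Rightarrow> real" where
  "dFy i j = (if i = 1 then (if j = 3 then -1 else if j = 4 then -2 else 0)
     else if i = 3 then (if j = 1 then 1 else 0) else if i = 4 then (if j = 1 then 2 else 0) else 0)"

lemma dmat_FM: "dmat FM p a = (\<chi> i j. a$1 * FM p $ i $ j + exp (p$1) * (a$3 * dFx i j + a$4 * dFy i j))"
  by (simp add: mat4_eq dmat_def sum_4 FM_def dFx_def dFy_def algebra_simps)

lemma dF_closed: "b \<bullet> (dmat FM p a *v c) - a \<bullet> (dmat FM p b *v c) + a \<bullet> (dmat FM p c *v b) = 0"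
  by (simp add: dmat_FM inner_vec_def matrix_vector_mult_def sum_4 FM_def dFx_def dFy_def algebra_simps)



lemma mv_neg: "A *v (- x) = - (A *v (x::real^4))"
  by (simp add: matrix_vector_mult_def vec_eq_iff sum_negf)

lemma neg_mv: "(- A) *v x = - (A *v (x::real^4))"
  by (simp add: matrix_vector_mult_def vec_eq_iff sum_negf)

lemma inner_transpose: "v \<bullet> (A *v w) = (transpose A *v v) \<bullet> (w::real^4)"
  by (simp add: dot_lmul_matrix)

lemma MM_symm: "v \<bullet> (MM p *v w) = w \<bullet> (MM p *v v)"
  by (subst inner_transpose) (simp add: MM_sym inner_commute)

lemma FM_antisymm: "a \<bullet> (FM p *v b) = - (b \<bullet> (FM p *v a))"
  by (subst inner_transpose) (simp add: FM_anti neg_mv inner_commute)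

lemma FJ_v: "FM p *v (JM p *v w) = MM p *v w"
  by (simp add: matrix_vector_mul_assoc FJ)

lemma om_eq: "(JM p *v a) \<bullet> (FM p *v (JM p *v b)) = a \<bullet> (FM p *v b)"
proof -
  have "(JM p *v a) \<bullet> (FM p *v (JM p *v b)) = b \<bullet> (MM p *v (JM p *v a))"
    using MM_symm[of "JM p *v a" p b] by (simp add: FJ_v)
  also have "\<dots> = b \<bullet> (FM p *v (JM p *v (JM p *v a)))" by (simp add: FJ_v)
  also have "\<dots> = - (b \<bullet> (FM p *v a))" by (simp add: JJ mv_neg)
  also have "\<dots> = a \<bullet> (FM p *v b)" using FM_antisymm[of a p b] by simp
  finally show ?thesis .
qed

lemma Jinv: "(JM p *v v) \<bullet> (FM p *v (JM p *v (JM p *v w))) = v \<bullet> (FM p *v (JM p *v w))"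
proof -
  have "(JM p *v v) \<bullet> (FM p *v (JM p *v (JM p *v w))) = - ((JM p *v v) \<bullet> (FM p *v w))"
    by (simp add: JJ mv_neg)
  also have "\<dots> = w \<bullet> (FM p *v (JM p *v v))" using FM_antisymm[of w p "JM p *v v"] by simp
  also have "\<dots> = v \<bullet> (FM p *v (JM p *v w))" using MM_symm[of w p v] by (simp add: FJ_v)
  finally show ?thesis .
qed

lemma MM_quad: "v \<bullet> (MM p *v v) = exp (p$1) * ((v$2 - (p$3*p$3+p$4*p$4)* v$1 + p$4* v$3 - p$3* v$4)^2
   + (v$1)^2 + 2*(v$3 - p$4* v$1)^2 + 2*(v$4 + p$3* v$1)^2)"
  by (simp add: inner_vec_def matrix_vector_mult_def sum_4 MM_def Let_def power2_eq_square algebra_simps)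

lemma MM_pos: assumes "v \<noteq> 0" shows "v \<bullet> (MM p *v v) > 0"
proof -
  let ?a = "(v$2 - (p$3*p$3+p$4*p$4)* v$1 + p$4* v$3 - p$3* v$4)" and ?b = "v$1"
    and ?c = "v$3 - p$4* v$1" and ?d = "v$4 + p$3* v$1"
  have "?a^2 + ?b^2 + 2*?c^2 + 2*?d^2 > 0"
  proof (rule ccontr)
    assume "\<not> ?thesis"
    then have "?a^2 + ?b^2 + 2*?c^2 + 2*?d^2 \<le> 0" by simp
    moreover have "?a^2 \<ge> 0" "?b^2 \<ge> 0" "?c^2 \<ge> 0" "?d^2 \<ge> 0" by simp_all
    ultimately have "?a^2 = 0" "?b^2 = 0" "?c^2 = 0" "?d^2 = 0" by linarith+
    then have "?a = 0" "?b = 0" "?c = 0" "?d = 0" by simp_all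
    then have "v = 0" by (simp add: vec4_eq)
    then show False using assms by simp
  qed
  then show ?thesis by (simp add: MM_quad)
qed

lemma Jfun: "Jop ppwave Zf (\<lambda>p. dv) (-1) = (\<lambda>p w. JM p *v w)"
  using Jop_eq by (intro ext) simp

lemma smoothV_diff: "smoothV X \<Longrightarrow> (\<lambda>q. X q $ k) differentiable (at p)"
  unfolding smoothV_def using smoothR_diff by blast

lemma PE_JM: "PE (\<lambda>q. JM q $ k $ j)"
proof -
  have "\<forall>k j. PE (\<lambda>q. JM q $ k $ j)" by (simp add: forall_4 JM_def Let_def)
  then show ?thesis by blast
qed

lemma PE_FM: "PE (\<lambda>q. FM q $ k $ j)"
proof -
  have "\<forall>k j. PE (\<lambda>q. FM q $ k $ j)" by (simp add: forall_4 FM_def)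
  then show ?thesis by blast
qed

lemma nijenhuis:
  assumes sX: "smoothV X" and sY: "smoothV Y"
  shows "lie (\<lambda>q. JM q *v X q) (\<lambda>q. JM q *v Y q) p - JM p *v lie (\<lambda>q. JM q *v X q) Y p
     - JM p *v lie X (\<lambda>q. JM q *v Y q) p - lie X Y p = 0"
proof -
  have dJ: "\<And>k j. (\<lambda>q. JM q $ k $ j) differentiable (at p)" using PE_JM by simp
  have dX: "\<And>j. (\<lambda>q. X q $ j) differentiable (at p)" using sX smoothV_diff by blast
  have dY: "\<And>j. (\<lambda>q. Y q $ j) differentiable (at p)" using sY smoothV_diff by blast
  note mX = jac_mv[OF dJ dX] and mY = jac_mv[OF dJ dY]
  have "lie (\<lambda>q. JM q *v X q) (\<lambda>q. JM q *v Y q) p - JM p *v lie (\<lambda>q. JM q *v X q) Y p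
     - JM p *v lie X (\<lambda>q. JM q *v Y q) p - lie X Y p =
     dmat JM p (JM p *v X p) *v Y p - dmat JM p (JM p *v Y p) *v X p
   + JM p *v (dmat JM p (Y p) *v X p) - JM p *v (dmat JM p (X p) *v Y p)"
    by (simp add: lie_jac mX mY JJ algebra_simps)
  then show ?thesis using Nij by simp
qed

lemma closed2:
  assumes sX: "smoothV X" and sY: "smoothV Y" and sZ: "smoothV Z"
  shows "vder X (\<lambda>q. Y q \<bullet> (FM q *v Z q)) p - vder Y (\<lambda>q. X q \<bullet> (FM q *v Z q)) p
     + vder Z (\<lambda>q. X q \<bullet> (FM q *v Y q)) p
     - lie X Y p \<bullet> (FM p *v Z p) + lie X Z p \<bullet> (FM p *v Y p) - lie Y Z p \<bullet> (FM p *v X p) = 0"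
proof -
  have dF: "\<And>k j. (\<lambda>q. FM q $ k $ j) differentiable (at p)" using PE_FM by simp
  have dX: "\<And>j. (\<lambda>q. X q $ j) differentiable (at p)" using sX smoothV_diff by blast
  have dY: "\<And>j. (\<lambda>q. Y q $ j) differentiable (at p)" using sY smoothV_diff by blast
  have dZ: "\<And>j. (\<lambda>q. Z q $ j) differentiable (at p)" using sZ smoothV_diff by blast
  define a where "a = X p"
  define b where "b = Y p"
  define c where "c = Z p"
  define F where "F = FM p"
  define JX where "JX = jac X p"
  define JY where "JY = jac Y p"
  define JZ where "JZ = jac Z p"
  have e1: "vder X (\<lambda>q. Y q \<bullet> (FM q *v Z q)) p = (JY *v a) \<bullet> (F *v c) + b \<bullet> (dmat FM p a *v c) + b \<bullet> (F *v (JZ *v a))"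
    unfolding a_def b_def c_def F_def JX_def JY_def JZ_def by (rule vder_om[OF dF dY dZ])
  have e2: "vder Y (\<lambda>q. X q \<bullet> (FM q *v Z q)) p = (JX *v b) \<bullet> (F *v c) + a \<bullet> (dmat FM p b *v c) + a \<bullet> (F *v (JZ *v b))"
    unfolding a_def b_def c_def F_def JX_def JY_def JZ_def by (rule vder_om[OF dF dX dZ])
  have e3: "vder Z (\<lambda>q. X q \<bullet> (FM q *v Y q)) p = (JX *v c) \<bullet> (F *v b) + a \<bullet> (dmat FM p c *v b) + a \<bullet> (F *v (JY *v c))"
    unfolding a_def b_def c_def F_def JX_def JY_def JZ_def by (rule vder_om[OF dF dX dY])
  have l1: "lie X Y p = JY *v a - JX *v b" unfolding a_def b_def JX_def JY_def by (rule lie_jac)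
  have l2: "lie X Z p = JZ *v a - JX *v c" unfolding a_def c_def JX_def JZ_def by (rule lie_jac)
  have l3: "lie Y Z p = JZ *v b - JY *v c" unfolding b_def c_def JY_def JZ_def by (rule lie_jac)
  have as1: "b \<bullet> (F *v (JZ *v a)) = - ((JZ *v a) \<bullet> (F *v b))" unfolding F_def by (rule FM_antisymm)
  have as2: "a \<bullet> (F *v (JZ *v b)) = - ((JZ *v b) \<bullet> (F *v a))" unfolding F_def by (rule FM_antisymm)
  have as3: "a \<bullet> (F *v (JY *v c)) = - ((JY *v c) \<bullet> (F *v a))" unfolding F_def by (rule FM_antisymm)
  have cl: "b \<bullet> (dmat FM p a *v c) - a \<bullet> (dmat FM p b *v c) + a \<bullet> (dmat FM p c *v b) = 0" by (rule dF_closed)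
  show ?thesis
    unfolding e1 e2 e3 l1 l2 l3
    using as1 as2 as3 cl unfolding a_def[symmetric] b_def[symmetric] c_def[symmetric] F_def[symmetric]
    by (simp add: inner_diff_left)
qed

lemma kaehler_main:
  "kaehler (\<lambda>p v w. dform1 (\<lambda>q. exp (cu q) *\<^sub>R flat ppwave Zf q) p v (Jop ppwave Zf (\<lambda>p. dv) (-1) p w))
      (Jop ppwave Zf (\<lambda>p. dv) (-1))"
  unfolding kaehler_def Jfun dform_eq
proof (intro conjI)
  have "\<forall>i k. PE (\<lambda>p. (JM p *v axis i 1) $ k)" by (simp add: forall_4 JMv axis_def)
  then show "\<forall>i k. smoothR (\<lambda>p. (JM p *v axis i 1) $ k)" using PE_smooth by blast
  have "\<forall>i j. PE (\<lambda>p. axis i 1 \<bullet> (FM p *v (JM p *v axis j 1)))"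
    by (simp add: forall_4 inner_vec_def matrix_vector_mult_def sum_4 axis_def PE_FM PE_JM)
  then show "\<forall>i j. smoothR (\<lambda>p. axis i 1 \<bullet> (FM p *v (JM p *v axis j 1)))" using PE_smooth by blast
  show "\<forall>p. linear ((*v) (JM p)) \<and> (\<forall>v. JM p *v (JM p *v v) = - v)"
    by (simp add: JJ matrix_vector_mul_linear)
  show "\<forall>p. bilinear (\<lambda>v w. v \<bullet> (FM p *v (JM p *v w))) \<and>
      (\<forall>v w. v \<bullet> (FM p *v (JM p *v w)) = w \<bullet> (FM p *v (JM p *v v))) \<and>
      (\<forall>v. v \<noteq> 0 \<longrightarrow> 0 < v \<bullet> (FM p *v (JM p *v v)))"
    by (simp add: FJ_v MM_symm[of _ _ ] MM_pos bilinear_def linear_iff inner_add_left inner_add_right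
        matrix_vector_right_distrib matrix_vector_mult_scaleR)
  show "\<forall>p v w. (JM p *v v) \<bullet> (FM p *v (JM p *v (JM p *v w))) = v \<bullet> (FM p *v (JM p *v w))"
    using Jinv by blast
  show "\<forall>X Y. smoothV X \<and> smoothV Y \<longrightarrow>
      (let JX = \<lambda>q. JM q *v X q; JY = \<lambda>q. JM q *v Y q
       in \<forall>p. lie JX JY p - JM p *v lie JX Y p - JM p *v lie X JY p - lie X Y p = 0)"
    using nijenhuis by (simp add: Let_def)
  show "\<forall>X Y Z. smoothV X \<and> smoothV Y \<and> smoothV Z \<longrightarrow>
      (let om = \<lambda>A B q. (JM q *v A q) \<bullet> (FM q *v (JM q *v B q))
       in \<forall>p. vder X (om Y Z) p - vder Y (om X Z) p + vder Z (om X Y) p - om (lie X Y) Z p +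
              om (lie X Z) Y p - om (lie Y Z) X p = 0)"
    using closed2 by (simp add: Let_def om_eq)
qed

theorem proposition10p1:
  shows "grad ppwave cu = (\<lambda>p. dv) \<and>
    (\<exists>eps.
      (\<forall>p. Jop ppwave Zf (grad ppwave cu) eps p (Xf p) = Yf p) \<and>
      admissible ppwave eps Zf (grad ppwave cu) \<and>
      kaehler
        (\<lambda>p v w. dform1 (\<lambda>q. exp (cu q) *\<^sub>R flat ppwave Zf q) p v
                   (Jop ppwave Zf (grad ppwave cu) eps p w))
        (Jop ppwave Zf (grad ppwave cu) eps))"
proof -
  have X: "\<forall>p. Jop ppwave Zf (\<lambda>p. dv) (-1) p (Xf p) = Yf p"
    by (simp add: Jop_eq JMv vec4_eq Xf_nth Yf_nth)
  show ?thesis unfolding grad_cu using X adm kaehler_main by blast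
qed

end
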